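(* Let $E$ be a finite graded atomic commutative monoid of idempotents with set of atoms $A$. Then $E$ has a monoid presentation with generators $a\in A$ and relations: $ab=ba$ for $a,b\in A$; and $a_1\cdots a_k=a_1\cdots a_kb$ for all $a_1,\ldots,a_k,b\in A$ with $1\le k\le\mathrm{rk}\,E$, $\{a_1,\dots,a_k\}$ independent and $b\le a_1\vee\cdots\vee a_k$.
   Context: A finite commutative monoid of idempotents $E$ is a join-semilattice with least element $\mathbf 0$ (the identity) and greatest element $\mathbf 1$ via $x\le y\iff xy=y$, with $xy=x\vee y$. It is graded if all saturated chains $\mathbf 0=x_0<\cdots<x_k=x$ have the same length $\mathrm{rk}(x)=k$, and $\mathrm{rk}\,E=\mathrm{rk}(\mathbf 1)$; atoms are the elements of rank $1$; $E$ is atomic if every element is a join of atoms. A set $S$ of atoms is independent if $\bigvee(S\setminus\{s\})<\bigvee S$ for every $s\in S$. *)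

theory Defs
  imports Main
begin

text \<open>A finite commutative monoid of idempotents is modelled as a finite type of class
  comm_monoid_mult with all elements idempotent. The monoid identity (written 1 in
  Isabelle) is the least element \<open>0\<close> of the paper.\<close>

definition le_E :: "'a::comm_monoid_mult \<Rightarrow> 'a \<Rightarrow> bool" where
  "le_E x y \<longleftrightarrow> x * y = y"

definition lt_E :: "'a::comm_monoid_mult \<Rightarrow> 'a \<Rightarrow> bool" where
  "lt_E x y \<longleftrightarrow> le_E x y \<and> x \<noteq> y"

definition covers_E :: "'a::comm_monoid_mult \<Rightarrow> 'a \<Rightarrow> bool" where
  "covers_E x y \<longleftrightarrow> lt_E x y \<and> \<not> (\<exists>z. lt_E x z \<and> lt_E z y)"

text \<open>A saturated chain \<open>0 = x_0 < ... < x_k = x\<close>, given as the list \<open>[x_0,...,x_k]\<close>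
  (of length k+1).\<close>
definition sat_chain :: "'a::comm_monoid_mult list \<Rightarrow> 'a \<Rightarrow> bool" where
  "sat_chain xs x \<longleftrightarrow> xs \<noteq> [] \<and> hd xs = 1 \<and> last xs = x \<and>
     (\<forall>i. Suc i < length xs \<longrightarrow> covers_E (xs ! i) (xs ! Suc i))"

definition graded_E :: "'a::{comm_monoid_mult,finite} itself \<Rightarrow> bool" where
  "graded_E _ \<longleftrightarrow> (\<forall>(x::'a) xs ys. sat_chain xs x \<and> sat_chain ys x \<longrightarrow> length xs = length ys)"

definition rk_E :: "'a::comm_monoid_mult \<Rightarrow> nat" where
  "rk_E x = (THE k. \<exists>xs. sat_chain xs x \<and> length xs = Suc k)"

text \<open>Greatest element \<open>1\<close> of the paper: the join (product) of all elements.\<close>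
definition top_E :: "'a::{comm_monoid_mult,finite}" where
  "top_E = (\<Prod>x\<in>UNIV. x)"

definition atoms_E :: "'a::comm_monoid_mult set" where
  "atoms_E = {a. rk_E a = 1}"

text \<open>Join of a finite set is its product.\<close>
definition atomic_E :: "'a::{comm_monoid_mult,finite} itself \<Rightarrow> bool" where
  "atomic_E _ \<longleftrightarrow> (\<forall>x::'a. \<exists>S. S \<subseteq> atoms_E \<and> x = (\<Prod>s\<in>S. s))"

definition independent_E :: "'a::comm_monoid_mult set \<Rightarrow> bool" where
  "independent_E S \<longleftrightarrow> (\<forall>s\<in>S. lt_E (\<Prod>t\<in>S - {s}. t) (\<Prod>t\<in>S. t))"

inductive cong_gen :: "'b set \<Rightarrow> ('b list \<Rightarrow> 'b list \<Rightarrow> bool) \<Rightarrow> 'b list \<Rightarrow> 'b list \<Rightarrow> bool"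
  for A R where
  base: "R u v \<Longrightarrow> set u \<subseteq> A \<Longrightarrow> set v \<subseteq> A \<Longrightarrow> cong_gen A R u v"
| refl: "set u \<subseteq> A \<Longrightarrow> cong_gen A R u u"
| sym: "cong_gen A R u v \<Longrightarrow> cong_gen A R v u"
| trans: "cong_gen A R u v \<Longrightarrow> cong_gen A R v w \<Longrightarrow> cong_gen A R u w"
| ctx: "cong_gen A R u v \<Longrightarrow> set p \<subseteq> A \<Longrightarrow> set q \<subseteq> A \<Longrightarrow> cong_gen A R (p @ u @ q) (p @ v @ q)"

text \<open>M is presented (as a monoid) by generators A \<subseteq> M (mapped to themselves) and
  relations R: the evaluation map from the free monoid on A (words) onto M is
  surjective and its kernel is the congruence generated by R.\<close>
definition presents :: "'a set \<Rightarrow> ('a list \<Rightarrow> 'a list \<Rightarrow> bool) \<Rightarrow> 'a::monoid_mult set \<Rightarrow> bool" where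
  "presents A R M \<longleftrightarrow>
     (\<forall>x\<in>M. \<exists>w. set w \<subseteq> A \<and> prod_list w = x) \<and>
     (\<forall>u v. set u \<subseteq> A \<longrightarrow> set v \<subseteq> A \<longrightarrow> (prod_list u = prod_list v \<longleftrightarrow> cong_gen A R u v))"

definition rels_E :: "'a::{comm_monoid_mult,finite} list \<Rightarrow> 'a list \<Rightarrow> bool" where
  "rels_E u v \<longleftrightarrow>
     (\<exists>a\<in>atoms_E. \<exists>b\<in>atoms_E. u = [a, b] \<and> v = [b, a]) \<or>
     (\<exists>as b. 1 \<le> length as \<and> length as \<le> rk_E (top_E::'a) \<and> set as \<subseteq> atoms_E \<and>
        b \<in> atoms_E \<and> independent_E (set as) \<and> le_E b (prod_list as) \<and>
        u = as \<and> v = as @ [b])"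

end

theory Submission imports Defs "HOL-Library.Multiset"
begin

locale IE =
  fixes T :: "'a::{comm_monoid_mult,finite} itself"
  assumes idem: "\<And>x::'a. x * x = x"
begin

lemma le_refl: "le_E (x::'a) x" by (simp add: le_E_def idem)

lemma le_trans: "le_E (x::'a) y \<Longrightarrow> le_E y z \<Longrightarrow> le_E x z"
  unfolding le_E_def by (metis mult.assoc)

lemma le_antisym: "le_E (x::'a) y \<Longrightarrow> le_E y x \<Longrightarrow> x = y"
  unfolding le_E_def by (metis mult.commute)

lemma le_mult1: "le_E (x::'a) (x*y)"
  unfolding le_E_def by (metis mult.assoc idem)

lemma le_mult2: "le_E (y::'a) (x*y)"
  unfolding le_E_def by (metis mult.assoc mult.commute idem)

lemma le_lub: "le_E (x::'a) z \<Longrightarrow> le_E y z \<Longrightarrow> le_E (x*y) z"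
  unfolding le_E_def by (metis mult.assoc)

lemma le_absorb: "le_E (b::'a) x \<Longrightarrow> x * b = x"
  unfolding le_E_def by (simp add: mult.commute)

lemma one_le: "le_E 1 (x::'a)" by (simp add: le_E_def)

lemma prod_list_set: "prod_list (w::'a list) = (\<Prod>x\<in>set w. x)"
proof (induction w)
  case Nil then show ?case by simp
next
  case (Cons a w)
  show ?case
  proof (cases "a \<in> set w")
    case True
    have "(\<Prod>x\<in>set w. x) = a * (\<Prod>x\<in>set w - {a}. x)"
      using True by (metis finite prod.remove)
    then have "a * (\<Prod>x\<in>set w. x) = (\<Prod>x\<in>set w. x)" by (metis mult.assoc idem)
    then show ?thesis using Cons True by (simp add: insert_absorb)
  next
    case False then show ?thesis using Cons by simp
  qed
qed

lemma prod_mono: "(S::'a set) \<subseteq> R \<Longrightarrow> le_E (\<Prod>x\<in>S. x) (\<Prod>x\<in>R. x)"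
proof -
  assume "S \<subseteq> R"
  then have "(\<Prod>x\<in>R. x) = (\<Prod>x\<in>R - S. x) * (\<Prod>x\<in>S. x)"
    by (metis finite prod.subset_diff)
  then show ?thesis by (simp add: le_mult2)
qed

lemma mem_le_prod: "(a::'a) \<in> S \<Longrightarrow> le_E a (\<Prod>x\<in>S. x)"
  using prod_mono[of "{a}" S] by simp

lemma mem_le_prod_list: "(a::'a) \<in> set w \<Longrightarrow> le_E a (prod_list w)"
  by (simp add: prod_list_set mem_le_prod)

lemma le_top: "le_E (x::'a) top_E"
  unfolding top_E_def by (rule mem_le_prod) simp

lemma lt_le_trans: "lt_E (x::'a) y \<Longrightarrow> le_E y z \<Longrightarrow> lt_E x z"
  unfolding lt_E_def using le_trans le_antisym by blast

lemma le_lt_trans: "le_E (x::'a) y \<Longrightarrow> lt_E y z \<Longrightarrow> lt_E x z"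
  unfolding lt_E_def using le_trans le_antisym by blast

lemma cov: "lt_E (x::'a) y \<Longrightarrow> \<exists>z. covers_E x z \<and> le_E z y"
proof (induction "card {w. lt_E x w \<and> lt_E w y}" arbitrary: y rule: less_induct)
  case less
  show ?case
  proof (cases "covers_E x y")
    case True then show ?thesis using le_refl by blast
  next
    case False
    then obtain w where w: "lt_E x w" "lt_E w y" using less.prems unfolding covers_E_def by blast
    have sub: "{v. lt_E x v \<and> lt_E v w} \<subset> {v. lt_E x v \<and> lt_E v y}"
    proof
      show "{v. lt_E x v \<and> lt_E v w} \<subseteq> {v. lt_E x v \<and> lt_E v y}"
        using w lt_le_trans unfolding lt_E_def by blast
      show "{v. lt_E x v \<and> lt_E v w} \<noteq> {v. lt_E x v \<and> lt_E v y}"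
        using w unfolding lt_E_def by blast
    qed
    then have "card {v. lt_E x v \<and> lt_E v w} < card {v. lt_E x v \<and> lt_E v y}"
      by (simp add: psubset_card_mono)
    from less.hyps[OF this w(1)] obtain z where "covers_E x z" "le_E z w" by blast
    then show ?thesis using w(2) le_trans unfolding lt_E_def by blast
  qed
qed

lemma sat_snoc: "sat_chain xs (x::'a) \<Longrightarrow> covers_E x z \<Longrightarrow> sat_chain (xs @ [z]) z"
proof -
  assume s: "sat_chain xs x" and c: "covers_E x z"
  have ne: "xs \<noteq> []" and h: "hd xs = 1" and l: "last xs = x"
    and st: "\<forall>i. Suc i < length xs \<longrightarrow> covers_E (xs ! i) (xs ! Suc i)"
    using s unfolding sat_chain_def by auto
  have "\<forall>i. Suc i < length (xs @ [z]) \<longrightarrow> covers_E ((xs @ [z]) ! i) ((xs @ [z]) ! Suc i)"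
  proof (intro allI impI)
    fix i assume i: "Suc i < length (xs @ [z])"
    show "covers_E ((xs @ [z]) ! i) ((xs @ [z]) ! Suc i)"
    proof (cases "Suc i < length xs")
      case True then show ?thesis using st by (simp add: nth_append)
    next
      case False
      then have "Suc i = length xs" using i by simp
      then have ii: "i = length xs - 1" by simp
      then have "(xs @ [z]) ! i = x" "(xs @ [z]) ! Suc i = z"
        using l ne \<open>Suc i = length xs\<close> by (auto simp: nth_append last_conv_nth)
      then show ?thesis using c by simp
    qed
  qed
  then show ?thesis using ne h unfolding sat_chain_def by auto
qed

lemma ext: "sat_chain xs (x::'a) \<Longrightarrow> le_E x y \<Longrightarrow> \<exists>ys. sat_chain ys y \<and> length xs \<le> length ys"
proof (induction "card {w. lt_E x w \<and> le_E w y}" arbitrary: x xs rule: less_induct)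
  case less
  show ?case
  proof (cases "x = y")
    case True then show ?thesis using less.prems by blast
  next
    case False
    then have "lt_E x y" using less.prems unfolding lt_E_def by simp
    then obtain z where z: "covers_E x z" "le_E z y" using cov by blast
    have xz: "lt_E x z" using z unfolding covers_E_def by simp
    have sc: "sat_chain (xs @ [z]) z" using sat_snoc less.prems z by blast
    have sub: "{v. lt_E z v \<and> le_E v y} \<subset> {v. lt_E x v \<and> le_E v y}"
    proof
      show "{v. lt_E z v \<and> le_E v y} \<subseteq> {v. lt_E x v \<and> le_E v y}"
        using xz le_lt_trans unfolding lt_E_def by blast
      show "{v. lt_E z v \<and> le_E v y} \<noteq> {v. lt_E x v \<and> le_E v y}"
        using xz z unfolding lt_E_def by blast
    qed
    then have "card {v. lt_E z v \<and> le_E v y} < card {v. lt_E x v \<and> le_E v y}"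
      by (simp add: psubset_card_mono)
    from less.hyps[OF this sc z(2)] show ?thesis by fastforce
  qed
qed

lemma ext_strict: "sat_chain xs (x::'a) \<Longrightarrow> lt_E x y \<Longrightarrow> \<exists>ys. sat_chain ys y \<and> length xs < length ys"
proof -
  assume s: "sat_chain xs x" and l: "lt_E x y"
  then obtain z where z: "covers_E x z" "le_E z y" using cov by blast
  have "sat_chain (xs @ [z]) z" using sat_snoc s z by blast
  from ext[OF this z(2)] show ?thesis by fastforce
qed

lemma one_chain: "sat_chain [1::'a] 1" unfolding sat_chain_def by simp


lemma chain_list:
  "(\<forall>i<length as. \<not> le_E (as!i) (prod_list (take i (as::'a list)))) \<Longrightarrow>
     \<exists>ys. sat_chain ys (prod_list as) \<and> length as < length ys"
proof (induction as rule: rev_induct)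
  case Nil then show ?case using one_chain by fastforce
next
  case (snoc a as)
  have "\<forall>i<length as. \<not> le_E (as!i) (prod_list (take i as))"
  proof (intro allI impI)
    fix i assume "i < length as"
    then show "\<not> le_E (as!i) (prod_list (take i as))"
      using snoc.prems[rule_format, of i] by (simp add: nth_append)
  qed
  then obtain ys where ys: "sat_chain ys (prod_list as)" "length as < length ys"
    using snoc.IH by blast
  have na: "\<not> le_E a (prod_list as)" using snoc.prems[rule_format, of "length as"] by simp
  have "lt_E (prod_list as) (prod_list (as @ [a]))"
  proof -
    have e: "prod_list (as @ [a]) = prod_list as * a" by simp
    have ne: "prod_list as \<noteq> prod_list as * a"
    proof
      assume h: "prod_list as = prod_list as * a"
      show False using na h le_mult2[of a "prod_list as"] by metis
    qed
    show ?thesis unfolding lt_E_def e using le_mult1[of "prod_list as" a] ne by blast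
  qed
  from ext_strict[OF ys(1) this] ys(2) show ?case by fastforce
qed

end

locale IEG = IE T for T :: "'a::{comm_monoid_mult,finite} itself" +
  assumes graded: "graded_E T"
begin

lemma rk_eq: "sat_chain xs (x::'a) \<Longrightarrow> rk_E x = length xs - 1"
proof -
  assume s: "sat_chain xs x"
  have ne: "xs \<noteq> []" using s unfolding sat_chain_def by simp
  show ?thesis unfolding rk_E_def
  proof (rule the_equality)
    show "\<exists>ys. sat_chain ys x \<and> length ys = Suc (length xs - 1)" using s ne by auto
  next
    fix k assume "\<exists>ys. sat_chain ys x \<and> length ys = Suc k"
    then obtain ys where "sat_chain ys x" "length ys = Suc k" by blast
    then have "length ys = length xs" using graded s unfolding graded_E_def by blast
    then show "k = length xs - 1" using \<open>length ys = Suc k\<close> by simp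
  qed
qed

lemma atom_ne_one: "(a::'a) \<in> atoms_E \<Longrightarrow> a \<noteq> 1"
  using rk_eq[OF one_chain] unfolding atoms_E_def by auto

lemma indep_bound:
  assumes d: "distinct (as::'a list)" and ind: "independent_E (set as)"
  shows "length as \<le> rk_E (top_E::'a)"
proof -
  have "\<forall>i<length as. \<not> le_E (as!i) (prod_list (take i as))"
  proof (intro allI impI notI)
    fix i assume i: "i < length as" and le: "le_E (as!i) (prod_list (take i as))"
    let ?a = "as!i" and ?S = "set as"
    have ain: "?a \<in> ?S" using i by simp
    have "?a \<notin> set (take i as)" using d i
      by (auto simp: in_set_conv_nth nth_eq_iff_index_eq)
    moreover have "set (take i as) \<subseteq> ?S" by (rule set_take_subset)
    ultimately have "set (take i as) \<subseteq> ?S - {?a}" by blast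
    then have "le_E (prod_list (take i as)) (\<Prod>x\<in>?S - {?a}. x)"
      using prod_mono prod_list_set by metis
    then have ale: "le_E ?a (\<Prod>x\<in>?S - {?a}. x)" using le le_trans by blast
    have "(\<Prod>x\<in>?S. x) = ?a * (\<Prod>x\<in>?S - {?a}. x)" using ain by (metis finite prod.remove)
    also have "\<dots> = (\<Prod>x\<in>?S - {?a}. x)" using le_absorb[OF ale] by (simp add: mult.commute)
    finally have "(\<Prod>x\<in>?S. x) = (\<Prod>x\<in>?S - {?a}. x)" .
    moreover have "lt_E (\<Prod>x\<in>?S - {?a}. x) (\<Prod>x\<in>?S. x)" using ind ain unfolding independent_E_def by blast
    ultimately show False unfolding lt_E_def by simp
  qed
  then obtain ys where ys: "sat_chain ys (prod_list as)" "length as < length ys"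
    using chain_list by blast
  obtain zs where zs: "sat_chain zs (top_E::'a)" "length ys \<le> length zs"
    using ext[OF ys(1) le_top] by blast
  show ?thesis using rk_eq[OF zs(1)] ys zs by simp
qed


abbreviation C where "C \<equiv> cong_gen (atoms_E::'a set) rels_E"

lemma sound: "C u v \<Longrightarrow> prod_list u = prod_list v"
proof (induction rule: cong_gen.induct)
  case (base u v)
  then show ?case
  proof (cases "\<exists>a\<in>atoms_E. \<exists>b\<in>atoms_E. u = [a, b] \<and> v = [b, a]")
    case True then show ?thesis by (auto simp: mult.commute)
  next
    case False
    then obtain as b where "le_E b (prod_list as)" "u = as" "v = as @ [b]"
      using base.hyps unfolding rels_E_def by blast
    then show ?thesis using le_absorb by simp
  qed
qed auto

lemma swap: "a \<in> atoms_E \<Longrightarrow> x \<in> atoms_E \<Longrightarrow> set r \<subseteq> atoms_E \<Longrightarrow> C (a#x#r) (x#a#r)"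
proof -
  assume h: "a \<in> atoms_E" "x \<in> atoms_E" "set r \<subseteq> atoms_E"
  have "C [a,x] [x,a]" using h by (intro cong_gen.base) (auto simp: rels_E_def)
  from cong_gen.ctx[OF this, of "[]" r] h show ?thesis by simp
qed

lemma move: "a \<in> atoms_E \<Longrightarrow> set p \<subseteq> atoms_E \<Longrightarrow> set q \<subseteq> atoms_E \<Longrightarrow> C (a#p@q) (p@a#q)"
proof (induction p)
  case Nil
  have "set (a#q) \<subseteq> atoms_E" using Nil by simp
  then show ?case by (simp add: cong_gen.refl)
next
  case (Cons x p)
  have 1: "C (a#x#p@q) (x#a#p@q)" using swap Cons.prems by simp
  have "C (a#p@q) (p@a#q)" using Cons by simp
  from cong_gen.ctx[OF this, of "[x]" "[]"] Cons.prems have "C (x#a#p@q) (x#p@a#q)" by simp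
  then show ?case using 1 cong_gen.trans by fastforce
qed

lemma perm: "set u \<subseteq> atoms_E \<Longrightarrow> mset u = mset v \<Longrightarrow> C u v"
proof (induction u arbitrary: v)
  case Nil then show ?case by (auto intro: cong_gen.refl)
next
  case (Cons a u)
  have "a \<in> set v" using Cons.prems(2) by (metis list.set_intros(1) set_mset_mset)
  then obtain p q where v: "v = p @ a # q" by (metis split_list)
  have sv: "set v \<subseteq> atoms_E" using Cons.prems by (metis set_mset_mset)
  have "mset u = mset (p @ q)" using Cons.prems(2) v by simp
  then have "C u (p @ q)" using Cons by simp
  from cong_gen.ctx[OF this, of "[a]" "[]"] Cons.prems have 1: "C (a#u) (a#p@q)" by simp
  have "C (a#p@q) (p@a#q)" using move sv v by simp
  then show ?case using 1 v cong_gen.trans by fastforce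
qed

lemma absorb:
  assumes "as \<noteq> []" "set as \<subseteq> atoms_E" "independent_E (set as)" "length as \<le> rk_E (top_E::'a)"
  shows "set w \<subseteq> atoms_E \<Longrightarrow> \<forall>c\<in>set w. le_E c (prod_list as) \<Longrightarrow> C as (as @ w)"
proof (induction w)
  case Nil then show ?case using assms by (auto intro: cong_gen.refl)
next
  case (Cons c w)
  have "C as (as @ [c])" using assms Cons.prems
    by (intro cong_gen.base) (auto simp: rels_E_def Suc_le_eq)
  from cong_gen.ctx[OF this, of "[]" w] Cons.prems
  have "C (as @ w) (as @ c # w)" by simp
  then show ?case using Cons cong_gen.trans by fastforce
qed

lemma reduce:
  assumes "u \<noteq> []" "set u \<subseteq> atoms_E"
  shows "\<exists>as. as \<noteq> [] \<and> distinct as \<and> set as \<subseteq> set u \<and> independent_E (set as) \<and>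
     prod_list as = prod_list (u::'a list)"
proof -
  let ?P = "\<lambda>S. S \<subseteq> set u \<and> (\<Prod>x\<in>S. x) = (\<Prod>x\<in>set u. x)"
  obtain S where S: "?P S" and min: "\<And>R. ?P R \<Longrightarrow> card S \<le> card R"
    using ex_has_least_nat[of ?P "set u" card] by blast
  have ind: "independent_E S" unfolding independent_E_def lt_E_def
  proof (intro ballI conjI)
    fix s assume s: "s \<in> S"
    show "le_E (\<Prod>t\<in>S - {s}. t) (\<Prod>t\<in>S. t)" by (rule prod_mono) blast
    show "(\<Prod>t\<in>S - {s}. t) \<noteq> (\<Prod>t\<in>S. t)"
    proof
      assume "(\<Prod>t\<in>S - {s}. t) = (\<Prod>t\<in>S. t)"
      then have "?P (S - {s})" using S by auto
      then have "card S \<le> card (S - {s})" by (rule min)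
      moreover have "card (S - {s}) < card S" using card_Diff1_less[OF finite s] .
      ultimately show False by simp
    qed
  qed
  have "S \<noteq> {}"
  proof
    assume "S = {}"
    then have e: "(\<Prod>x\<in>set u. x) = 1" using S by simp
    obtain a where a: "a \<in> set u" using assms(1) by (cases u) auto
    have "le_E a 1" using mem_le_prod[OF a] e by simp
    then have "a = 1" unfolding le_E_def by simp
    then show False using atom_ne_one a assms(2) by blast
  qed
  obtain as where as: "set as = S" "distinct as" using finite_distinct_list[OF finite[of S]] by blast
  show ?thesis
    apply (rule exI[of _ as])
    using as S ind \<open>S \<noteq> {}\<close> by (auto simp: prod_list_set)
qed

lemma distinct_sub_mset: "distinct xs \<Longrightarrow> set xs \<subseteq> set ys \<Longrightarrow> mset xs \<subseteq># mset ys"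
proof -
  assume d: "distinct xs" and s: "set xs \<subseteq> set ys"
  have "count (mset xs) a \<le> count (mset ys) a" for a
  proof (cases "a \<in> set xs")
    case True
    then have "count (mset xs) a = 1" using d by (simp add: distinct_count_atmost_1)
    moreover have "count (mset ys) a > 0" using True s by auto
    ultimately show ?thesis by simp
  next
    case False then show ?thesis by (metis count_mset_0_iff le0)
  qed
  then show ?thesis by (simp add: subseteq_mset_def)
qed

lemma key:
  assumes u: "u \<noteq> []" "set u \<subseteq> atoms_E" and v: "set v \<subseteq> atoms_E"
    and le: "le_E (prod_list v) (prod_list (u::'a list))"
  shows "C u (u @ v)"
proof -
  obtain as where as: "as \<noteq> []" "distinct as" "set as \<subseteq> set u" "independent_E (set as)"
     "prod_list as = prod_list u" using reduce[OF u] by blast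
  have sa: "set as \<subseteq> atoms_E" using as u by blast
  have lenb: "length as \<le> rk_E (top_E::'a)" using indep_bound as by blast
  have "mset as \<subseteq># mset u" using distinct_sub_mset as by blast
  obtain rest where rest: "mset rest = mset u - mset as" using ex_mset by blast
  have mu: "mset u = mset (as @ rest)" using rest \<open>mset as \<subseteq># mset u\<close> by simp
  have sr: "set rest \<subseteq> set u" using mu by (metis set_append set_mset_mset sup_ge2)
  have 1: "C u (as @ rest)" using perm mu u by blast
  have sra: "set rest \<subseteq> atoms_E" using sr u by blast
  have rle: "\<forall>c\<in>set rest. le_E c (prod_list as)"
  proof
    fix c assume "c \<in> set rest"
    then have "c \<in> set u" using sr by blast
    then show "le_E c (prod_list as)" using mem_le_prod_list as(5) by simp
  qed
  have 2: "C as (as @ rest)" using absorb[OF as(1) sa as(4) lenb sra rle] .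
  have vle: "\<forall>c\<in>set v. le_E c (prod_list as)"
  proof
    fix c assume "c \<in> set v"
    then have "le_E c (prod_list v)" by (rule mem_le_prod_list)
    then show "le_E c (prod_list as)" using le as(5) le_trans by simp
  qed
  have srv: "set (rest @ v) \<subseteq> atoms_E" using sra v by simp
  have rvle: "\<forall>c\<in>set (rest @ v). le_E c (prod_list as)" using rle vle by auto
  have 3: "C as (as @ (rest @ v))" using absorb[OF as(1) sa as(4) lenb srv rvle] .
  have sarv: "set (as @ rest @ v) \<subseteq> atoms_E" using sa sr u v by auto
  have 4: "C (as @ rest @ v) (u @ v)" using perm[OF sarv] mu by simp
  have "C (as @ rest) as" using 2 by (rule cong_gen.sym)
  with 1 have "C u as" by (rule cong_gen.trans)
  with 3 have "C u (as @ rest @ v)" using cong_gen.trans by blast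
  with 4 show ?thesis using cong_gen.trans by blast
qed

lemma complete:
  assumes "set u \<subseteq> atoms_E" "set v \<subseteq> atoms_E" "prod_list u = prod_list (v::'a list)"
  shows "C u v"
proof -
  have nil: "w = []" if "set w \<subseteq> atoms_E" "prod_list w = 1" for w :: "'a list"
  proof (rule ccontr)
    assume "w \<noteq> []"
    then obtain a where a: "a \<in> set w" by (cases w) auto
    have "le_E a 1" using mem_le_prod_list[OF a] that by simp
    then have "a = 1" unfolding le_E_def by simp
    then show False using atom_ne_one a that by blast
  qed
  show ?thesis
  proof (cases "u = [] \<or> v = []")
    case True
    then have "u = [] \<and> v = []" using nil assms by force
    then show ?thesis by (auto intro: cong_gen.refl)
  next
    case False
    have 1: "C u (u @ v)" using key[of u v] False assms le_refl by simp
    have 2: "C v (v @ u)" using key[of v u] False assms le_refl by simp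
    have 3: "C (u @ v) (v @ u)" using perm[of "u @ v" "v @ u"] assms by (simp add: union_commute)
    have "C (v @ u) v" using 2 by (rule cong_gen.sym)
    then show ?thesis using 1 3 cong_gen.trans by blast
  qed
qed

end

theorem proposition1:
  assumes idem: "\<forall>x::'a::{comm_monoid_mult,finite}. x * x = x"
    and graded: "graded_E TYPE('a)"
    and atomic: "atomic_E TYPE('a)"
  shows "presents (atoms_E :: 'a set) rels_E UNIV"
proof -
  interpret IEG "TYPE('a)" by unfold_locales (use idem graded in auto)
  have surj: "\<forall>x\<in>(UNIV::'a set). \<exists>w. set w \<subseteq> atoms_E \<and> prod_list w = x"
  proof
    fix x :: 'a
    obtain S where S: "S \<subseteq> atoms_E" "x = (\<Prod>s\<in>S. s)" using atomic unfolding atomic_E_def by blast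
    obtain w where "set w = S" "distinct w" using finite_distinct_list[OF finite[of S]] by blast
    then show "\<exists>w. set w \<subseteq> atoms_E \<and> prod_list w = x" using S prod_list_set by metis
  qed
  show ?thesis unfolding presents_def using surj sound complete by blast
qed

end
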